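(* Let $n\ge 3$ and $\ell>0$, and let $S=(n-2)I_n+\mathbf{1}_n\mathbf{1}_n^\top$. For every real symmetric diagonally dominant $n\times n$ matrix $J$ with $J_{ij}\ge \ell$ for all $i,j$, $J$ is invertible and $$\|J^{-1}\|_\infty\le \frac{1}{\ell}\|S^{-1}\|_\infty=\frac{3n-4}{2\ell(n-2)(n-1)}.$$ Moreover, equality holds if and only if $J=\ell S$.
   Context: $I_n$ is the $n\times n$ identity matrix and $\mathbf{1}_n$ the all-ones column vector in $\mathbb{R}^n$. For a real $n\times n$ matrix $J$, $\Delta_i(J)=|J_{ii}|-\sum_{j\ne i}|J_{ij}|$; $J$ is diagonally dominant if $\Delta_i(J)\ge 0$ for all $i$. $\|A\|_\infty$ denotes the maximum absolute row sum of $A$ (the operator norm induced by the $\ell^\infty$ vector norm). *)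

theory Defs
  imports "HOL-Analysis.Analysis"
begin

text \<open>Maximum absolute row sum of a square real matrix (operator norm induced by the l-infinity norm).\<close>
definition inf_norm :: "real^'n^'n \<Rightarrow> real" where
  "inf_norm A = Max (range (\<lambda>i. \<Sum>j\<in>UNIV. \<bar>A $ i $ j\<bar>))"

definition row_excess :: "real^'n^'n \<Rightarrow> 'n \<Rightarrow> real" where
  "row_excess J i = \<bar>J $ i $ i\<bar> - (\<Sum>j\<in>UNIV - {i}. \<bar>J $ i $ j\<bar>)"

definition diag_dominant :: "real^'n^'n \<Rightarrow> bool" where
  "diag_dominant J \<longleftrightarrow> (\<forall>i. row_excess J i \<ge> 0)"

definition S_mat :: "real^'n^'n" where
  "S_mat = (real CARD('n) - 2) *\<^sub>R mat 1 + (\<chi> i j. 1)"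

end

theory Submission
  imports Defs
begin


definition vinf :: "real^'n \<Rightarrow> real" where
  "vinf x = Max (range (\<lambda>i. \<bar>x$i\<bar>))"

lemma vinf_ge: "\<bar>x$i\<bar> \<le> vinf x"
  unfolding vinf_def by (rule Max_ge) auto

lemma vinf_attained: "\<exists>i. \<bar>x$i\<bar> = vinf x"
proof -
  have "vinf x \<in> range (\<lambda>i. \<bar>x$i\<bar>)" unfolding vinf_def by (rule Max_in) auto
  then show ?thesis by auto
qed

lemma vinf_le: "(\<And>i. \<bar>x$i\<bar> \<le> B) \<Longrightarrow> vinf x \<le> B"
  using vinf_attained[of x] by metis

lemma vinf_pos: "x \<noteq> 0 \<Longrightarrow> vinf x > 0"
proof -
  assume "x \<noteq> 0"
  then obtain i where "x$i \<noteq> 0" by (metis vec_eq_iff zero_index)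
  then show ?thesis using vinf_ge[of x i] by linarith
qed

lemma vinf_uminus: "vinf (-x) = vinf x"
  unfolding vinf_def by simp

lemma S_entry: "(S_mat::real^'n^'n)$i$j = (real CARD('n) - 2) * (if i = j then 1 else 0) + 1"
  unfolding S_mat_def by (simp add: mat_def)

lemma S_mult: "((S_mat::real^'n^'n) *v x)$i = (real CARD('n) - 2) * x$i + (\<Sum>j\<in>UNIV. x$j)"
proof -
  have "((S_mat::real^'n^'n) *v x)$i = (\<Sum>j\<in>UNIV. (real CARD('n) - 2) * ((if i = j then 1 else 0) * x$j) + x$j)"
    unfolding matrix_vector_mult_def S_entry by (simp add: algebra_simps)
  also have "\<dots> = (real CARD('n) - 2) * x$i + (\<Sum>j\<in>UNIV. x$j)"
  proof -
    have d: "(\<Sum>j\<in>UNIV. (if i = j then 1 else 0) * x$j) = (\<Sum>j\<in>UNIV. if i = j then x$j else 0)"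
      by (rule sum.cong) auto
    show ?thesis by (simp add: sum.distrib sum_distrib_left[symmetric] d)
  qed
  finally show ?thesis .
qed

lemma sum_minus_i: fixes i :: "'a::finite" shows "(\<Sum>j\<in>UNIV-{i}. f j) = (\<Sum>j\<in>UNIV. f j) - (f i :: real)"
  by (simp add: sum_diff1)

lemma cert_identity:
  fixes D :: "real^'n^'n" and w x :: "real^'n"
  assumes sym: "\<And>i j. D$i$j = D$j$i"
  shows "2 * (\<Sum>i\<in>UNIV. w$i * (D *v x)$i) =
    2 * (\<Sum>i\<in>UNIV. w$i * x$i * (D$i$i - (\<Sum>j\<in>UNIV-{i}. D$i$j)))
    + (\<Sum>i\<in>UNIV. \<Sum>j\<in>UNIV-{i}. D$i$j * ((w$i + w$j) * (x$i + x$j)))"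
proof -
  define r where "r i = (\<Sum>j\<in>UNIV. D$i$j)" for i
  have Dx: "(D *v x)$i = (\<Sum>j\<in>UNIV. D$i$j * x$j)" for i
    by (simp add: matrix_vector_mult_def)
  have e1: "(\<Sum>i\<in>UNIV. \<Sum>j\<in>UNIV. D$i$j * (w$j * x$j)) = (\<Sum>i\<in>UNIV. w$i * x$i * r i)"
  proof -
    have "(\<Sum>i\<in>UNIV. \<Sum>j\<in>UNIV. D$i$j * (w$j * x$j)) = (\<Sum>j\<in>UNIV. \<Sum>i\<in>UNIV. D$i$j * (w$j * x$j))"
      by (rule sum.swap)
    also have "\<dots> = (\<Sum>j\<in>UNIV. w$j * x$j * r j)"
      unfolding r_def by (simp add: sum_distrib_left sym mult.commute mult.left_commute)
    finally show ?thesis .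
  qed
  have e2: "(\<Sum>i\<in>UNIV. \<Sum>j\<in>UNIV. D$i$j * (w$j * x$i)) = (\<Sum>i\<in>UNIV. w$i * (D *v x)$i)"
  proof -
    have "(\<Sum>i\<in>UNIV. \<Sum>j\<in>UNIV. D$i$j * (w$j * x$i)) = (\<Sum>j\<in>UNIV. \<Sum>i\<in>UNIV. D$i$j * (w$j * x$i))"
      by (rule sum.swap)
    also have "\<dots> = (\<Sum>j\<in>UNIV. w$j * (D *v x)$j)"
      unfolding Dx by (simp add: sum_distrib_left sym mult.commute mult.left_commute)
    finally show ?thesis .
  qed
  have e3: "(\<Sum>i\<in>UNIV. \<Sum>j\<in>UNIV. D$i$j * (w$i * x$j)) = (\<Sum>i\<in>UNIV. w$i * (D *v x)$i)"
    unfolding Dx by (simp add: sum_distrib_left mult.commute mult.left_commute)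
  have e4: "(\<Sum>i\<in>UNIV. \<Sum>j\<in>UNIV. D$i$j * (w$i * x$i)) = (\<Sum>i\<in>UNIV. w$i * x$i * r i)"
    unfolding r_def by (simp add: sum_distrib_left mult.commute mult.left_commute)
  have full: "(\<Sum>i\<in>UNIV. \<Sum>j\<in>UNIV. D$i$j * ((w$i + w$j) * (x$i + x$j)))
      = 2 * (\<Sum>i\<in>UNIV. w$i * x$i * r i) + 2 * (\<Sum>i\<in>UNIV. w$i * (D *v x)$i)"
  proof -
    have "(\<Sum>i\<in>UNIV. \<Sum>j\<in>UNIV. D$i$j * ((w$i + w$j) * (x$i + x$j)))
      = (\<Sum>i\<in>UNIV. (\<Sum>j\<in>UNIV. D$i$j * (w$i * x$i)) + (\<Sum>j\<in>UNIV. D$i$j * (w$j * x$j))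
          + (\<Sum>j\<in>UNIV. D$i$j * (w$i * x$j)) + (\<Sum>j\<in>UNIV. D$i$j * (w$j * x$i)))"
      by (simp add: sum.distrib[symmetric] algebra_simps)
    also have "\<dots> = 2 * (\<Sum>i\<in>UNIV. w$i * x$i * r i) + 2 * (\<Sum>i\<in>UNIV. w$i * (D *v x)$i)"
      by (simp add: sum.distrib e1 e2 e3 e4)
    finally show ?thesis .
  qed
  have rem: "(\<Sum>i\<in>UNIV. \<Sum>j\<in>UNIV-{i}. D$i$j * ((w$i + w$j) * (x$i + x$j)))
     = (\<Sum>i\<in>UNIV. \<Sum>j\<in>UNIV. D$i$j * ((w$i + w$j) * (x$i + x$j))) - (\<Sum>i\<in>UNIV. 4 * D$i$i * (w$i * x$i))"
    by (simp add: sum_minus_i sum_subtractf algebra_simps)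
  have rem2: "(\<Sum>i\<in>UNIV. w$i * x$i * (D$i$i - (\<Sum>j\<in>UNIV-{i}. D$i$j)))
     = (\<Sum>i\<in>UNIV. 2 * D$i$i * (w$i * x$i)) - (\<Sum>i\<in>UNIV. w$i * x$i * r i)"
    unfolding r_def by (simp add: sum_minus_i sum_subtractf algebra_simps)
  show ?thesis
  proof -
    have "(\<Sum>i\<in>UNIV. 4 * D$i$i * (w$i * x$i)) = 2 * (\<Sum>i\<in>UNIV. 2 * D$i$i * (w$i * x$i))"
      by (simp add: sum_distrib_left mult.assoc)
    then show ?thesis unfolding rem rem2 full by (simp add: algebra_simps)
  qed
qed



lemma consts_facts:
  fixes n c z0 :: real
  assumes n3: "n \<ge> 3" and c_def: "c = 2*(n-2)*(n-1)/(3*n-4)" and z0_def: "z0 = (n-2)^2/(3*n-4)"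
  shows "c = n - 2 - z0" "2*(n-2) - n*c + 2*(n-2)*z0 = 0" "2*c - 4*z0 > 0" "c > 0" "z0 \<ge> 0"
    "c - z0 > 0" "c < n - 2"
proof -
  have d: "3*n-4 > 0" using n3 by simp
  have "n - 2 - z0 = ((n-2)*(3*n-4) - (n-2)^2)/(3*n-4)"
    unfolding z0_def using d by (simp add: field_simps)
  also have "(n-2)*(3*n-4) - (n-2)^2 = 2*(n-2)*(n-1)" by (simp add: algebra_simps power2_eq_square)
  finally show "c = n - 2 - z0" unfolding c_def by simp
  have "n*c - 2*(n-2)*z0 = (2*n*(n-2)*(n-1) - 2*(n-2)*(n-2)^2)/(3*n-4)"
    unfolding c_def z0_def by (simp add: diff_divide_distrib)
  also have "2*n*(n-2)*(n-1) - 2*(n-2)*(n-2)^2 = 2*(n-2)*(3*n-4)"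
    by (simp add: algebra_simps power2_eq_square)
  finally show "2*(n-2) - n*c + 2*(n-2)*z0 = 0" using d by simp
  have "2*c - 4*z0 = (4*(n-2)*(n-1) - 4*(n-2)^2)/(3*n-4)"
    unfolding c_def z0_def by (simp add: diff_divide_distrib)
  also have "4*(n-2)*(n-1) - 4*(n-2)^2 = 4*(n-2)" by (simp add: algebra_simps power2_eq_square)
  finally show "2*c - 4*z0 > 0" using n3 d by simp
  show "c > 0" unfolding c_def using n3 d by simp
  show "z0 \<ge> 0" unfolding z0_def using d by simp
  have "c - z0 = (2*(n-2)*(n-1) - (n-2)^2)/(3*n-4)" unfolding c_def z0_def by (simp add: diff_divide_distrib)
  also have "2*(n-2)*(n-1) - (n-2)^2 = n*(n-2)" by (simp add: algebra_simps power2_eq_square)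
  finally show "c - z0 > 0" using n3 d by simp
  have "n - 2 - c = ((n-2)*(3*n-4) - 2*(n-2)*(n-1))/(3*n-4)" unfolding c_def using d by (simp add: field_simps)
  also have "(n-2)*(3*n-4) - 2*(n-2)*(n-1) = (n-2)^2" by (simp add: algebra_simps power2_eq_square)
  finally have "n - 2 - c = (n-2)^2/(3*n-4)" .
  moreover have "(n-2)^2/(3*n-4) > 0" using n3 d by simp
  ultimately show "c < n - 2" by linarith
qed



lemma Tcert:
  fixes D :: "real^'n^'n" and x :: "real^'n" and M s c z0 n :: real and k :: 'n
  assumes n_def: "n = real CARD('n)" and n3: "n \<ge> 3"
   and c_def: "c = 2*(n-2)*(n-1)/(3*n-4)" and z0_def: "z0 = (n-2)^2/(3*n-4)"
   and M_def: "M = vinf x" and Mpos: "M > 0" and xk: "x$k = -M"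
   and s_def: "s = (\<Sum>j\<in>UNIV. x$j)" and ss0: "s \<ge> z0*M"
   and Dsym: "\<And>i j. D$i$j = D$j$i" and Doff: "\<And>i j. i \<noteq> j \<Longrightarrow> D$i$j \<ge> 0"
   and Dsl: "\<And>i. D$i$i - (\<Sum>j\<in>UNIV-{i}. D$i$j) \<ge> 0"
  shows "c*M \<le> vinf (S_mat *v x + D *v x) \<and>
    (vinf (S_mat *v x + D *v x) \<le> c*M \<longrightarrow> s = z0*M \<and> (\<forall>i. i \<noteq> k \<longrightarrow> x$i > 0) \<and>
       (\<Sum>i\<in>UNIV. (if i = k then -1 else 1) * (D *v x)$i) = 0)"
proof -
  note cf = consts_facts[OF n3 c_def z0_def]
  have n2: "n - 2 > 0" using n3 by simp
  define \<tau> where "\<tau> = (c*M - s)/(n-2)"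
  have E1: "(n-2)*\<tau> = c*M - s" unfolding \<tau>_def using n2 by simp
  define T where "T = {i. \<tau> \<le> \<bar>x$i\<bar>}"
  define N where "N = {i\<in>T. x$i < 0}"
  define \<sigma> where "\<sigma> i = (if x$i < 0 then -1 else (1::real))" for i
  define w where "w = (\<chi> i. if i \<in> T then \<sigma> i else 0)"
  have absle: "\<bar>x$i\<bar> \<le> M" for i unfolding M_def by (rule vinf_ge)
  have "(n-2)*\<tau> \<le> (n-2)*M"
  proof -
    have "(c - z0)*M \<le> (n-2)*M" using cf Mpos by (intro mult_right_mono) auto
    then show ?thesis using E1 ss0 by (simp add: algebra_simps)
  qed
  then have tauM: "\<tau> \<le> M" using n2 by simp
  have kT: "k \<in> T" unfolding T_def using tauM xk Mpos by simp
  have kN: "k \<in> N" unfolding N_def using kT xk Mpos by simp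
  have wx: "w$i * x$i \<ge> 0" for i unfolding w_def \<sigma>_def by auto
  have wpair: "(w$i + w$j) * (x$i + x$j) \<ge> 0" for i j
    unfolding w_def \<sigma>_def T_def by (auto simp: abs_if mult_nonneg_nonneg mult_nonpos_nonpos)
  have wD: "(\<Sum>i\<in>UNIV. w$i * (D *v x)$i) \<ge> 0"
  proof -
    have "2 * (\<Sum>i\<in>UNIV. w$i * (D *v x)$i) \<ge> 0"
    proof -
      have t1: "(\<Sum>i\<in>UNIV. w$i * x$i * (D$i$i - (\<Sum>j\<in>UNIV-{i}. D$i$j))) \<ge> 0"
        by (intro sum_nonneg mult_nonneg_nonneg wx Dsl)
      have t2: "(\<Sum>i\<in>UNIV. \<Sum>j\<in>UNIV-{i}. D$i$j * ((w$i + w$j) * (x$i + x$j))) \<ge> 0"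
      proof (intro sum_nonneg)
        fix i j :: 'n assume "i \<in> UNIV" "j \<in> UNIV - {i}"
        then have "i \<noteq> j" by auto
        then show "D$i$j * ((w$i + w$j) * (x$i + x$j)) \<ge> 0"
          by (intro mult_nonneg_nonneg Doff wpair)
      qed
      show ?thesis unfolding cert_identity[of D w x, OF Dsym] using t1 t2 by simp
    qed
    then show ?thesis by simp
  qed
  define V where "V = S_mat *v x + D *v x"
  have Vi: "V$i = (n-2)*x$i + s + (D *v x)$i" for i
    unfolding V_def by (simp add: S_mult n_def s_def)
  have sw: "(\<Sum>i\<in>UNIV. w$i * f i) = (\<Sum>i\<in>T. \<sigma> i * f i)" for f
  proof -
    have "(\<Sum>i\<in>UNIV. w$i * f i) = (\<Sum>i\<in>UNIV. if i \<in> T then \<sigma> i * f i else 0)"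
      unfolding w_def by (rule sum.cong) auto
    also have "\<dots> = (\<Sum>i\<in>UNIV \<inter> T. \<sigma> i * f i)" by (rule sum.inter_restrict[symmetric]) simp
    finally show ?thesis by simp
  qed
  define F where "F = (\<Sum>i\<in>T. \<sigma> i * ((n-2)*x$i + s))"
  have sumV: "(\<Sum>i\<in>UNIV. w$i * V$i) = F + (\<Sum>i\<in>UNIV. w$i * (D *v x)$i)"
  proof -
    have "(\<Sum>i\<in>UNIV. w$i * V$i) = (\<Sum>i\<in>UNIV. w$i * ((n-2)*x$i + s)) + (\<Sum>i\<in>UNIV. w$i * (D *v x)$i)"
    proof -
      have pw: "\<And>i. w$i * V$i = w$i*((n-2)*x$i + s) + w$i*(D *v x)$i" by (simp add: Vi algebra_simps)
      show ?thesis by (simp only: pw sum.distrib)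
    qed
    then show ?thesis unfolding F_def sw .
  qed
  define t where "t = real (card T)"
  have upper: "(\<Sum>i\<in>UNIV. w$i * V$i) \<le> t * vinf V"
  proof -
    have "(\<Sum>i\<in>T. \<sigma> i * V$i) \<le> (\<Sum>i\<in>T. vinf V)"
    proof (rule sum_mono)
      fix i assume "i \<in> T"
      have "\<sigma> i * V$i \<le> \<bar>V$i\<bar>" unfolding \<sigma>_def by auto
      then show "\<sigma> i * V$i \<le> vinf V" using vinf_ge[of V i] by linarith
    qed
    then show ?thesis unfolding sw t_def by simp
  qed
  define q where "q = real (card N)"
  define ST where "ST = (\<Sum>i\<in>T. x$i)"
  define SO where "SO = (\<Sum>i\<in>UNIV-T. x$i)"
  define SN where "SN = (\<Sum>i\<in>N. \<bar>x$i\<bar>)"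
  have NT: "N \<subseteq> T" unfolding N_def by auto
  have Fform: "F = (n-2)*(ST + 2*SN) + s*(t - 2*q)"
  proof -
    have a: "\<sigma> i * ((n-2)*x$i + s) = (n-2)*x$i + s + (if i \<in> N then (n-2)*(2 * \<bar>x$i\<bar>) - 2* s else 0)"
      if "i \<in> T" for i
      using that unfolding \<sigma>_def N_def by (auto simp: algebra_simps)
    have "F = (\<Sum>i\<in>T. (n-2)*x$i + s) + (\<Sum>i\<in>T. if i \<in> N then (n-2)*(2 * \<bar>x$i\<bar>) - 2* s else 0)"
      unfolding F_def by (simp add: a sum.distrib)
    also have "(\<Sum>i\<in>T. if i \<in> N then (n-2)*(2 * \<bar>x$i\<bar>) - 2* s else 0) = (\<Sum>i\<in>T \<inter> N. (n-2)*(2 * \<bar>x$i\<bar>) - 2* s)"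
      by (rule sum.inter_restrict[symmetric]) simp
    also have "T \<inter> N = N" using NT by auto
    finally have F1: "F = (\<Sum>i\<in>T. (n-2)*x$i + s) + (\<Sum>i\<in>N. (n-2)*(2 * \<bar>x$i\<bar>) - 2 * s)" .
    have F2: "(\<Sum>i\<in>T. (n-2)*x$i + s) = (n-2)*ST + s*t"
      unfolding ST_def t_def by (simp add: sum.distrib sum_distrib_left[symmetric])
    have F3: "(\<Sum>i\<in>N. (n-2)*(2 * \<bar>x$i\<bar>) - 2 * s) = (n-2)*(2*SN) - 2 * s * q"
      unfolding SN_def q_def by (simp add: sum_subtractf sum_distrib_left[symmetric])
    show ?thesis unfolding F1 F2 F3 by (simp add: algebra_simps)
  qed
  have f4: "s = ST + SO"
    unfolding s_def ST_def SO_def by (simp add: sum.subset_diff[of T UNIV])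
  have cardT: "real (card (UNIV - T)) = n - t"
    unfolding n_def t_def by (simp add: card_Diff_subset of_nat_diff card_mono)
  have f1: "SO \<le> (n - t)*\<tau>"
  proof -
    have "SO \<le> (\<Sum>i\<in>UNIV-T. \<tau>)" unfolding SO_def
      by (rule sum_mono) (auto simp: T_def)
    then show ?thesis using cardT by simp
  qed
  have f1s: "SO < (n - t)*\<tau>" if "T \<noteq> UNIV"
  proof -
    have "SO < (\<Sum>i\<in>UNIV-T. \<tau>)" unfolding SO_def
      using that by (intro sum_strict_mono) (auto simp: T_def)
    then show ?thesis using cardT by simp
  qed
  have f2: "SN \<ge> M + (q-1)*\<tau>"
  proof -
    have "SN = \<bar>x$k\<bar> + (\<Sum>i\<in>N-{k}. \<bar>x$i\<bar>)" unfolding SN_def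
      using kN by (simp add: sum.remove)
    moreover have "(\<Sum>i\<in>N-{k}. \<bar>x$i\<bar>) \<ge> (\<Sum>i\<in>N-{k}. \<tau>)"
      by (rule sum_mono) (auto simp: N_def T_def)
    moreover have "real (card (N - {k})) = q - 1"
    proof -
      have cN: "0 < card N" using kN by (auto simp: card_gt_0_iff)
      then show ?thesis unfolding q_def using kN by (simp add: of_nat_diff)
    qed
    ultimately show ?thesis using xk Mpos by simp
  qed
  have SNM: "SN \<ge> M"
  proof -
    have "\<bar>x$k\<bar> \<le> SN" unfolding SN_def using kN by (intro member_le_sum) auto
    then show ?thesis using xk Mpos by simp
  qed
  have f3: "s \<le> (n - q)*M - SN"
  proof -
    have "s = (\<Sum>i\<in>UNIV-N. x$i) + (\<Sum>i\<in>N. x$i)"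
      unfolding s_def by (simp add: sum.subset_diff[of N UNIV])
    moreover have "(\<Sum>i\<in>N. x$i) = - SN" unfolding SN_def
      by (simp add: sum_negf[symmetric] N_def)
    moreover have "(\<Sum>i\<in>UNIV-N. x$i) \<le> (\<Sum>i\<in>UNIV-N. M)"
      by (rule sum_mono) (use absle in \<open>auto simp: abs_le_iff\<close>)
    moreover have "real (card (UNIV - N)) = n - q"
      unfolding n_def q_def by (simp add: card_Diff_subset of_nat_diff card_mono)
    ultimately show ?thesis by simp
  qed
  have cN: "0 < card N" using kN by (auto simp: card_gt_0_iff)
  then have q1: "q \<ge> 1" unfolding q_def by simp
  have z0M: "z0*M \<ge> 0" using cf(5) Mpos by simp
  have qn: "q \<le> n - 1"
  proof -
    have "(n - q)*M - M \<ge> 0" using f3 SNM ss0 z0M by linarith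
    then have "(n - q - 1)*M \<ge> 0" by (simp add: algebra_simps)
    then show ?thesis using Mpos by (simp add: zero_le_mult_iff)
  qed
  have q2: "2*q \<le> n"
  proof -
    have h1: "s \<le> (n-q)*M - M - (q-1)*\<tau>" using f3 f2 by linarith
    have h2: "(n-2)* s \<le> (n-2)*((n-q)*M - M - (q-1)*\<tau>)" using h1 n2 by (intro mult_left_mono) auto
    have h3: "(n-2)*((n-q)*M - M - (q-1)*\<tau>) = (n-2)*(n-q-1)*M - (q-1)*((n-2)*\<tau>)"
      by (simp add: algebra_simps)
    have h3b: "(q-1)*((n-2)*\<tau>) = (q-1)*c*M - (q-1)* s" unfolding E1 by (simp add: algebra_simps)
    have h3c: "(n-q-1)* s = (n-2)* s - (q-1)* s" by (simp add: algebra_simps)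
    have h4: "(n-q-1)* s \<le> (n-2)*(n-q-1)*M - (q-1)*c*M" using h2 h3 h3b h3c by linarith
    have h5: "(n-q-1)*(z0*M) \<le> (n-q-1)* s" using qn ss0 by (intro mult_left_mono) auto
    have h6: "(n-2)*(n-q-1)*M - (n-q-1)*(z0*M) = (n-q-1)*(c*M)" unfolding cf(1) by (simp add: algebra_simps)
    have h7: "(q-1)*c*M = (q-1)*(c*M)" by simp
    have "(q-1)*(c*M) \<le> (n-q-1)*(c*M)" using h4 h5 h6 h7 by linarith
    moreover have "c*M > 0" using cf(4) Mpos by simp
    ultimately have "q - 1 \<le> n - q - 1" by (rule mult_right_le_imp_le)
    then show ?thesis by simp
  qed
  define a where "a = (n-t)*\<tau> - SO"
  define b where "b = SN - M - (q-1)*\<tau>"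
  have STe: "ST = s - SO" using f4 by simp
  have ident: "F - c*t*M - ((n-2)*a + 2*(n-2)*b + (q-1)*(2*c - 4*z0)*M + (2*n - 4*q)*(s - z0*M))
      = (2*(q-1) - (n-t))*((n-2)*\<tau> - c*M + s) + M*(2*(n-2) - n*c + 2*(n-2)*z0)"
    unfolding Fform STe a_def b_def by (simp add: algebra_simps)
  have key: "F - c*t*M = (n-2)*a + 2*(n-2)*b + (q-1)*(2*c - 4*z0)*M + (2*n - 4*q)*(s - z0*M)"
    using ident E1 cf(2) by simp
  have a0: "a \<ge> 0" unfolding a_def using f1 by simp
  have b0: "b \<ge> 0" unfolding b_def using f2 by simp
  have r1: "(n-2)*a \<ge> 0" using a0 n2 by simp
  have r2: "2*(n-2)*b \<ge> 0" using b0 n2 by simp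
  have r3: "(q-1)*(2*c - 4*z0)*M \<ge> 0" using q1 cf(3) Mpos by simp
  have r4: "(2*n - 4*q)*(s - z0*M) \<ge> 0" using q2 ss0 by simp
  have Fge: "F \<ge> c*t*M" using key r1 r2 r3 r4 by linarith
  have t1: "t \<ge> 1" unfolding t_def using kT by (auto simp: card_gt_0_iff Suc_le_eq)
  have low: "t * (c*M) \<le> t * vinf V" using Fge wD upper sumV by (simp add: algebra_simps)
  then have lowV: "c*M \<le> vinf V" using t1 by simp
  have tight: "s = z0*M \<and> (\<forall>i. i \<noteq> k \<longrightarrow> x$i > 0) \<and>
       (\<Sum>i\<in>UNIV. (if i = k then -1 else 1) * (D *v x)$i) = 0" if vle: "vinf V \<le> c*M"
  proof -
    have "t * vinf V \<le> t * (c*M)" using vle t1 by (intro mult_left_mono) auto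
    then have Feq: "F - c*t*M + (\<Sum>i\<in>UNIV. w$i * (D *v x)$i) \<le> 0" using upper sumV by (simp add: algebra_simps)
    have wD0: "(\<Sum>i\<in>UNIV. w$i * (D *v x)$i) = 0" using Feq Fge wD by linarith
    have z1: "(n-2)*a = 0" and z3: "(q-1)*(2*c - 4*z0)*M = 0" and z4: "(2*n - 4*q)*(s - z0*M) = 0"
      using Feq key r1 r2 r3 r4 wD by linarith+
    have TU: "T = UNIV"
    proof (rule ccontr)
      assume "T \<noteq> UNIV"
      from f1s[OF this] have "a > 0" unfolding a_def by simp
      then show False using z1 n2 by simp
    qed
    have qq: "q = 1" using z3 cf(3) Mpos by simp
    have ss: "s = z0*M" using z4 qq n3 by simp
    have "card N = 1" using qq unfolding q_def by simp
    then have Nk: "N = {k}" using kN by (auto simp: card_1_singleton_iff)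
    have taup: "\<tau> > 0"
    proof -
      have "(n-2)*\<tau> = (c - z0)*M" using E1 ss by (simp add: algebra_simps)
      moreover have "(c - z0)*M > 0" using cf(6) Mpos by simp
      ultimately have "(n-2)*\<tau> > 0" by simp
      then show ?thesis using n2 by (simp add: zero_less_mult_iff)
    qed
    have xpos: "x$i > 0" if "i \<noteq> k" for i
    proof -
      have "i \<in> T" using TU by simp
      moreover have "i \<notin> N" using Nk that by simp
      ultimately have "\<not> x$i < 0" "\<tau> \<le> \<bar>x$i\<bar>" unfolding N_def T_def by auto
      then show ?thesis using taup by linarith
    qed
    have wk: "w$i = (if i = k then -1 else 1)" for i
    proof -
      have "i \<in> T" using TU by simp
      then show ?thesis unfolding w_def \<sigma>_def using xpos xk Mpos by (cases "i = k") (auto, smt (verit) xpos)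
    qed
    show ?thesis using ss xpos wD0 unfolding wk by simp
  qed
  show ?thesis using lowV tight unfolding V_def by blast
qed



definition cN :: "nat \<Rightarrow> real" where
  "cN m = 2*(real m - 2)*(real m - 1)/(3*real m - 4)"

lemma key_pos:
  fixes J :: "real^'n^'n" and x :: "real^'n"
  assumes n3: "CARD('n) \<ge> 3" and sym: "\<And>i j. J$i$j = J$j$i" and dd: "diag_dominant J"
    and ge: "\<And>i j. J$i$j \<ge> 1" and xnz: "x \<noteq> 0" and spos: "(\<Sum>j\<in>UNIV. x$j) \<ge> 0"
  shows "cN CARD('n) * vinf x \<le> vinf (J *v x) \<and> (J \<noteq> S_mat \<longrightarrow> cN CARD('n) * vinf x < vinf (J *v x))"
proof -
  define n where "n = real CARD('n)"
  define c where "c = 2*(n-2)*(n-1)/(3*n-4)"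
  define z0 where "z0 = (n-2)^2/(3*n-4)"
  have n3': "n \<ge> 3" unfolding n_def using n3 by simp
  have n2: "n - 2 > 0" using n3' by simp
  have cc: "cN CARD('n) = c" unfolding cN_def c_def n_def by simp
  note cf = consts_facts[OF n3' c_def z0_def]
  define M where "M = vinf x"
  have Mpos: "M > 0" unfolding M_def using xnz by (rule vinf_pos)
  define s where "s = (\<Sum>j\<in>UNIV. x$j)"
  define D where "D = J - S_mat"
  have Dent: "D$i$j = J$i$j - (n - 2) * (if i = j then 1 else 0) - 1" for i j
    unfolding D_def by (simp add: S_entry n_def)
  have Dsym: "D$i$j = D$j$i" for i j unfolding Dent using sym[of i j] by auto
  have Doff: "D$i$j \<ge> 0" if "i \<noteq> j" for i j unfolding Dent using that ge[of i j] by simp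
  have Dsl: "D$i$i - (\<Sum>j\<in>UNIV-{i}. D$i$j) \<ge> 0" for i
  proof -
    have "(\<Sum>j\<in>UNIV-{i}. D$i$j) = (\<Sum>j\<in>UNIV-{i}. J$i$j - 1)"
      by (rule sum.cong) (auto simp: Dent)
    also have "\<dots> = (\<Sum>j\<in>UNIV-{i}. J$i$j) - (n - 1)"
      by (simp add: sum_subtractf n_def of_nat_diff)
    finally have e: "D$i$i - (\<Sum>j\<in>UNIV-{i}. D$i$j) = J$i$i - (\<Sum>j\<in>UNIV-{i}. J$i$j)"
      by (simp add: Dent)
    have "row_excess J i \<ge> 0" using dd unfolding diag_dominant_def by simp
    moreover have "row_excess J i = J$i$i - (\<Sum>j\<in>UNIV-{i}. J$i$j)"
    proof -
      have "\<bar>J$i$i\<bar> = J$i$i" using ge[of i i] by simp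
      moreover have "(\<Sum>j\<in>UNIV-{i}. \<bar>J$i$j\<bar>) = (\<Sum>j\<in>UNIV-{i}. J$i$j)"
      proof (rule sum.cong)
        fix j show "\<bar>J$i$j\<bar> = J$i$j" using ge[of i j] by simp
      qed simp
      ultimately show ?thesis unfolding row_excess_def by simp
    qed
    ultimately show ?thesis using e by simp
  qed
  have JSD: "J = S_mat + D" unfolding D_def by simp
  define V where "V = J *v x"
  have VSD: "V = S_mat *v x + D *v x" unfolding V_def by (subst JSD) (simp add: matrix_vector_mult_add_rdistrib)
  have Vi: "V$i = (n-2)*x$i + s + (D *v x)$i" for i
    unfolding VSD by (simp add: S_mult n_def s_def)
  have absle: "\<bar>x$i\<bar> \<le> M" for i unfolding M_def by (rule vinf_ge)
  have rowD: "e * (D *v x)$k = M * (D$k$k - (\<Sum>j\<in>UNIV-{k}. D$k$j)) + (\<Sum>j\<in>UNIV-{k}. D$k$j * (M + e * x$j))"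
    if ek: "e * x$k = M" and e1: "e = 1 \<or> e = -1" for k e
  proof -
    have "(D *v x)$k = D$k$k * x$k + (\<Sum>j\<in>UNIV-{k}. D$k$j * x$j)"
      by (simp add: matrix_vector_mult_def sum.remove)
    then have "e * (D *v x)$k = D$k$k * (e * x$k) + (\<Sum>j\<in>UNIV-{k}. D$k$j * (e * x$j))"
      by (simp add: algebra_simps sum_distrib_left)
    also have "\<dots> = M * (D$k$k - (\<Sum>j\<in>UNIV-{k}. D$k$j)) + (\<Sum>j\<in>UNIV-{k}. D$k$j * (M + e * x$j))"
      unfolding ek by (simp add: algebra_simps sum.distrib sum_distrib_left)
    finally show ?thesis .
  qed
  have rowD0: "(\<Sum>j\<in>UNIV-{k}. D$k$j * (M + e * x$j)) \<ge> 0" if e1: "e = 1 \<or> e = -1" for k e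
  proof (rule sum_nonneg)
    fix j assume "j \<in> UNIV - {k}"
    then have "D$k$j \<ge> 0" using Doff by auto
    moreover have "M + e * x$j \<ge> 0" using absle[of j] e1 by (auto simp: abs_le_iff)
    ultimately show "D$k$j * (M + e * x$j) \<ge> 0" by simp
  qed
  have sl0: "M * (D$k$k - (\<Sum>j\<in>UNIV-{k}. D$k$j)) \<ge> 0" for k using Mpos Dsl[of k] by simp
  show ?thesis
  proof (cases "\<exists>k. x$k = M")
    case True
    then obtain k where xk: "x$k = M" by blast
    have "(D *v x)$k \<ge> 0" using rowD[of 1 k] rowD0[of 1 k] sl0[of k] xk by simp
    then have "V$k \<ge> (n-2)*M" using Vi[of k] xk spos unfolding s_def by simp
    moreover have "c*M < (n-2)*M" using cf(7) Mpos by simp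
    moreover have "V$k \<le> vinf V" using vinf_ge[of V k] by simp
    ultimately have "c*M < vinf V" by linarith
    then show ?thesis unfolding cc V_def M_def by simp
  next
    case False
    obtain k where "\<bar>x$k\<bar> = M" using vinf_attained[of x] unfolding M_def by blast
    then have xk: "x$k = -M" using False by (auto simp: abs_if split: if_splits)
    have xlt: "x$j < M" for j using False absle[of j] by (auto simp: abs_le_iff) (metis order_less_le)
    have mDk: "-(D *v x)$k = M * (D$k$k - (\<Sum>j\<in>UNIV-{k}. D$k$j)) + (\<Sum>j\<in>UNIV-{k}. D$k$j * (M + -1 * x$j))"
      using rowD[of "-1" k] xk by simp
    have mDk0: "-(D *v x)$k \<ge> 0" using mDk rowD0[of "-1" k] sl0[of k] by simp
    have A: "(n-2)*M - s - (D *v x)$k \<le> vinf V"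
    proof -
      have "-(V$k) \<le> vinf V" using vinf_ge[of V k] by simp
      then show ?thesis using Vi[of k] xk by (simp add: algebra_simps)
    qed
    have TC: "c*M \<le> vinf (S_mat *v x + D *v x) \<and>
      (vinf (S_mat *v x + D *v x) \<le> c*M \<longrightarrow> s = z0*M \<and> (\<forall>i. i \<noteq> k \<longrightarrow> x$i > 0) \<and>
       (\<Sum>i\<in>UNIV. (if i = k then -1 else 1) * (D *v x)$i) = 0)" if "s \<ge> z0*M"
      by (rule Tcert[OF n_def n3' c_def z0_def M_def Mpos xk s_def that Dsym Doff Dsl])
    have low: "c*M \<le> vinf V"
    proof (cases "s \<le> z0*M")
      case True
      have "c*M = (n-2)*M - z0*M" unfolding cf(1) by (simp add: algebra_simps)
      then show ?thesis using A mDk0 True by linarith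
    next
      case False
      then show ?thesis using TC VSD by simp
    qed
    have strict: "c*M < vinf V" if JS: "J \<noteq> S_mat"
    proof (rule ccontr)
      assume "\<not> c*M < vinf V"
      then have vle: "vinf V \<le> c*M" by simp
      have cz: "c*M = (n-2)*M - z0*M" unfolding cf(1) by (simp add: algebra_simps)
      have sge: "s \<ge> z0*M"
      proof (rule ccontr)
        assume "\<not> s \<ge> z0*M"
        then show False using A mDk0 vle cz by linarith
      qed
      from TC[OF sge] vle VSD have ss: "s = z0*M" and xpos: "\<And>i. i \<noteq> k \<Longrightarrow> x$i > 0"
        and wz: "(\<Sum>i\<in>UNIV. (if i = k then -1 else 1) * (D *v x)$i) = 0" by auto
      have "-(D *v x)$k \<le> 0" using A vle cz ss by linarith
      then have mz: "M * (D$k$k - (\<Sum>j\<in>UNIV-{k}. D$k$j)) + (\<Sum>j\<in>UNIV-{k}. D$k$j * (M + -1 * x$j)) = 0"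
        using mDk mDk0 by linarith
      have slk: "D$k$k - (\<Sum>j\<in>UNIV-{k}. D$k$j) = 0"
        using mz rowD0[of "-1" k] sl0[of k] Mpos by (simp add: add_nonneg_eq_0_iff)
      have Dk: "D$k$j = 0" if "j \<noteq> k" for j
      proof -
        have "(\<Sum>j\<in>UNIV-{k}. D$k$j * (M + -1 * x$j)) = 0"
          using mz rowD0[of "-1" k] sl0[of k] by (simp add: add_nonneg_eq_0_iff)
        moreover have "\<forall>j\<in>UNIV-{k}. D$k$j * (M + -1 * x$j) \<ge> 0"
          using Doff xlt by (auto intro!: mult_nonneg_nonneg simp: less_imp_le)
        ultimately have "\<forall>j\<in>UNIV-{k}. D$k$j * (M + -1 * x$j) = 0"
          by (metis (no_types, lifting) finite sum_nonneg_eq_0_iff)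
        then have "D$k$j * (M - x$j) = 0" using that by auto
        moreover have "M - x$j > 0" using xlt[of j] by simp
        ultimately show ?thesis by simp
      qed
      define w where "w = (\<chi> i. if i = k then -1 else (1::real))"
      have wxp: "w$i * x$i > 0" for i unfolding w_def using xk Mpos xpos[of i] by auto
      have wpair: "(w$i + w$j) * (x$i + x$j) \<ge> 0" for i j
        unfolding w_def using xpos[of i] xpos[of j] xk Mpos by auto
      have idz: "2 * (\<Sum>i\<in>UNIV. w$i * x$i * (D$i$i - (\<Sum>j\<in>UNIV-{i}. D$i$j)))
        + (\<Sum>i\<in>UNIV. \<Sum>j\<in>UNIV-{i}. D$i$j * ((w$i + w$j) * (x$i + x$j))) = 0"
        unfolding cert_identity[of D w x, OF Dsym, symmetric] using wz unfolding w_def by simp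
      have t1: "\<forall>i\<in>UNIV. w$i * x$i * (D$i$i - (\<Sum>j\<in>UNIV-{i}. D$i$j)) \<ge> 0"
        using wxp Dsl by (auto intro!: mult_nonneg_nonneg simp: less_imp_le)
      have t2: "\<forall>i\<in>UNIV. \<forall>j\<in>UNIV-{i}. D$i$j * ((w$i + w$j) * (x$i + x$j)) \<ge> 0"
        using Doff wpair by (auto intro!: mult_nonneg_nonneg)
      have t2s: "\<forall>i\<in>UNIV. (\<Sum>j\<in>UNIV-{i}. D$i$j * ((w$i + w$j) * (x$i + x$j))) \<ge> 0"
      proof
        fix i :: 'n assume "i \<in> UNIV"
        show "(\<Sum>j\<in>UNIV-{i}. D$i$j * ((w$i + w$j) * (x$i + x$j))) \<ge> 0"
          by (rule sum_nonneg) (use t2 in blast)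
      qed
      have S1: "(\<Sum>i\<in>UNIV. w$i * x$i * (D$i$i - (\<Sum>j\<in>UNIV-{i}. D$i$j))) \<ge> 0"
        using t1 by (auto intro!: sum_nonneg)
      have S2: "(\<Sum>i\<in>UNIV. \<Sum>j\<in>UNIV-{i}. D$i$j * ((w$i + w$j) * (x$i + x$j))) \<ge> 0"
        by (rule sum_nonneg) (use t2s in blast)
      have S1z: "(\<Sum>i\<in>UNIV. w$i * x$i * (D$i$i - (\<Sum>j\<in>UNIV-{i}. D$i$j))) = 0"
        using idz S1 S2 by linarith
      have S2z: "(\<Sum>i\<in>UNIV. \<Sum>j\<in>UNIV-{i}. D$i$j * ((w$i + w$j) * (x$i + x$j))) = 0"
        using idz S1 S2 by linarith
      have slz: "D$i$i - (\<Sum>j\<in>UNIV-{i}. D$i$j) = 0" for i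
      proof -
        have "w$i * x$i * (D$i$i - (\<Sum>j\<in>UNIV-{i}. D$i$j)) = 0"
          using S1z t1 by (simp add: sum_nonneg_eq_0_iff)
        moreover have "w$i * x$i \<noteq> 0" using wxp[of i] by (metis less_irrefl)
        ultimately show ?thesis by (metis mult_eq_0_iff)
      qed
      have Doz: "D$i$j = 0" if "i \<noteq> j" for i j
      proof (cases "i = k \<or> j = k")
        case True
        then show ?thesis using Dk that Dsym by auto
      next
        case False
        have "(\<Sum>j\<in>UNIV-{i}. D$i$j * ((w$i + w$j) * (x$i + x$j))) = 0"
          using S2z t2s by (simp add: sum_nonneg_eq_0_iff)
        moreover have "\<forall>j\<in>UNIV-{i}. D$i$j * ((w$i + w$j) * (x$i + x$j)) \<ge> 0" using t2 by blast
        ultimately have "\<forall>j\<in>UNIV-{i}. D$i$j * ((w$i + w$j) * (x$i + x$j)) = 0"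
          by (metis (no_types, lifting) finite sum_nonneg_eq_0_iff)
        then have "D$i$j * ((w$i + w$j) * (x$i + x$j)) = 0" using that by blast
        moreover have "(w$i + w$j) * (x$i + x$j) > 0"
          unfolding w_def using False xpos[of i] xpos[of j] by simp
        ultimately show ?thesis by (metis less_irrefl mult_eq_0_iff)
      qed
      have "D = 0"
      proof -
        have "D$i$j = 0" for i j
        proof (cases "i = j")
          case True
          have "(\<Sum>j\<in>UNIV-{i}. D$i$j) = 0" using Doz by (auto intro: sum.neutral)
          then show ?thesis using slz[of i] True by simp
        next
          case False
          then show ?thesis using Doz by simp
        qed
        then show ?thesis by (simp add: vec_eq_iff)
      qed
      then show False using JS JSD by simp
    qed
    show ?thesis using low strict unfolding cc V_def M_def by simp
  qed
qed



lemma key: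
  fixes J :: "real^'n^'n" and x :: "real^'n"
  assumes n3: "CARD('n) \<ge> 3" and sym: "\<And>i j. J$i$j = J$j$i" and dd: "diag_dominant J"
    and ge: "\<And>i j. J$i$j \<ge> 1" and xnz: "x \<noteq> 0"
  shows "cN CARD('n) * vinf x \<le> vinf (J *v x) \<and> (J \<noteq> S_mat \<longrightarrow> cN CARD('n) * vinf x < vinf (J *v x))"
proof (cases "(\<Sum>j\<in>UNIV. x$j) \<ge> 0")
  case True
  then show ?thesis using key_pos[OF n3 sym dd ge xnz] by blast
next
  case False
  have s': "(\<Sum>j\<in>UNIV. (-x)$j) \<ge> 0" using False by (simp add: sum_negf)
  have xnz': "-x \<noteq> 0" using xnz by simp
  have neg: "J *v (-x) = -(J *v x)" by (simp add: vec_eq_iff matrix_vector_mult_def sum_negf)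
  show ?thesis using key_pos[OF n3 sym dd ge xnz' s'] unfolding neg vinf_uminus .
qed

lemma cN_pos: "CARD('n) \<ge> 3 \<Longrightarrow> cN CARD('n) > 0"
  unfolding cN_def by (simp add: divide_pos_pos)

definition rs :: "real^'n^'n \<Rightarrow> 'n \<Rightarrow> real" where
  "rs A i = (\<Sum>j\<in>UNIV. \<bar>A$i$j\<bar>)"

lemma inf_norm_ge: "rs A i \<le> inf_norm A"
  unfolding inf_norm_def rs_def by (rule Max_ge) auto

lemma inf_norm_attained: "\<exists>i. inf_norm A = rs A i"
proof -
  have "inf_norm A \<in> range (rs A)" unfolding inf_norm_def rs_def by (rule Max_in) auto
  then show ?thesis by auto
qed

lemma inf_norm_scale: "l > 0 \<Longrightarrow> inf_norm (l *\<^sub>R A) = l * inf_norm A"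
proof -
  assume l: "l > 0"
  have rsl: "rs (l *\<^sub>R A) i = l * rs A i" for i
    unfolding rs_def using l by (simp add: abs_mult sum_distrib_left)
  obtain i where i: "inf_norm (l *\<^sub>R A) = rs (l *\<^sub>R A) i" using inf_norm_attained by blast
  obtain i' where i': "inf_norm A = rs A i'" using inf_norm_attained by blast
  have "rs A i \<le> rs A i'" using inf_norm_ge[of A i] i' by simp
  moreover have "rs (l *\<^sub>R A) i' \<le> rs (l *\<^sub>R A) i" using inf_norm_ge[of "l *\<^sub>R A" i'] i by simp
  ultimately show ?thesis using i i' rsl l by (simp add: order_antisym)
qed

lemma core:
  fixes J A :: "real^'n^'n"
  assumes n3: "CARD('n) \<ge> 3" and sym: "\<And>i j. J$i$j = J$j$i" and dd: "diag_dominant J"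
    and ge: "\<And>i j. J$i$j \<ge> 1" and JA: "J ** A = mat 1"
  shows "inf_norm A \<le> 1 / cN CARD('n) \<and> (J \<noteq> S_mat \<longrightarrow> inf_norm A < 1 / cN CARD('n))"
proof -
  define c where "c = cN CARD('n)"
  have cpos: "c > 0" unfolding c_def using n3 by (rule cN_pos)
  have row: "rs A i \<le> 1/c \<and> (J \<noteq> S_mat \<longrightarrow> rs A i < 1/c)" for i
  proof -
    define b where "b = (\<chi> j. sgn (A$i$j))"
    define x where "x = A *v b"
    have Jx: "J *v x = b" unfolding x_def by (simp add: matrix_vector_mul_assoc JA)
    have xi: "x$i = rs A i" unfolding x_def b_def rs_def matrix_vector_mult_def
      by (simp add: sgn_if abs_if cong: if_cong) (rule sum.cong, auto)
    have vb: "vinf b \<le> 1" by (rule vinf_le) (simp add: b_def sgn_if)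
    show ?thesis
    proof (cases "x = 0")
      case True
      then have "rs A i = 0" using xi by simp
      then show ?thesis using cpos by simp
    next
      case False
      from key[OF n3 sym dd ge False] have k1: "c * vinf x \<le> 1" and k2: "J \<noteq> S_mat \<longrightarrow> c * vinf x < 1"
        unfolding Jx c_def using vb by auto
      have "rs A i \<le> vinf x" using vinf_ge[of x i] xi by simp
      then have m: "c * rs A i \<le> c * vinf x" using cpos by simp
      have a1: "c * rs A i \<le> 1" using m k1 by linarith
      have a2: "J \<noteq> S_mat \<longrightarrow> c * rs A i < 1" using m k2 by linarith
      have "rs A i \<le> 1/c" using a1 cpos by (simp add: pos_le_divide_eq mult.commute)
      moreover have "J \<noteq> S_mat \<longrightarrow> rs A i < 1/c" using a2 cpos by (simp add: pos_less_divide_eq mult.commute)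
      ultimately show ?thesis by blast
    qed
  qed
  obtain i where "inf_norm A = rs A i" using inf_norm_attained by blast
  then show ?thesis using row[of i] unfolding c_def by simp
qed



lemma S_hyps:
  assumes n3: "CARD('n) \<ge> 3"
  shows "\<And>i j. (S_mat::real^'n^'n)$i$j = S_mat$j$i" "diag_dominant (S_mat::real^'n^'n)"
    "\<And>i j. (S_mat::real^'n^'n)$i$j \<ge> 1"
proof -
  define n where "n = real CARD('n)"
  have n3': "n \<ge> 3" unfolding n_def using n3 by simp
  show "\<And>i j. (S_mat::real^'n^'n)$i$j = S_mat$j$i" by (auto simp: S_entry)
  show "\<And>i j. (S_mat::real^'n^'n)$i$j \<ge> 1" using n3 by (auto simp: S_entry)
  show "diag_dominant (S_mat::real^'n^'n)" unfolding diag_dominant_def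
  proof
    fix i :: 'n
    have "(\<Sum>j\<in>UNIV-{i}. \<bar>(S_mat::real^'n^'n)$i$j\<bar>) = (\<Sum>j\<in>UNIV-{i}. 1)"
      by (rule sum.cong) (auto simp: S_entry)
    also have "\<dots> = n - 1" unfolding n_def by (simp add: of_nat_diff)
    finally have "row_excess (S_mat::real^'n^'n) i = \<bar>n - 2 + 1\<bar> - (n - 1)"
      unfolding row_excess_def by (simp add: S_entry n_def)
    then show "row_excess (S_mat::real^'n^'n) i \<ge> 0" using n3' by simp
  qed
qed

lemma S_lower:
  fixes A :: "real^'n^'n"
  assumes n3: "CARD('n) \<ge> 3" and AS: "A ** S_mat = mat 1"
  shows "inf_norm A \<ge> 1 / cN CARD('n)"
proof -
  define n where "n = real CARD('n)"
  have n3': "n \<ge> 3" unfolding n_def using n3 by simp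
  obtain k :: 'n where True by simp
  define x0 where "x0 = (\<chi> j. if j = k then -(3*n-4) else n)"
  define b where "b = (\<chi> j. if j = k then -1 else (1::real))"
  define K where "K = 2*(n-2)*(n-1)"
  have Kpos: "K > 0" unfolding K_def using n3' by simp
  have sx0: "(\<Sum>j\<in>UNIV. x0$j) = (n-2)^2"
  proof -
    have "(\<Sum>j\<in>UNIV. x0$j) = (\<Sum>j\<in>UNIV. n - (if j = k then 4*n-4 else 0))"
      unfolding x0_def by (rule sum.cong) auto
    also have "\<dots> = n*n - (4*n-4)" by (simp add: sum_subtractf n_def)
    finally show ?thesis by (simp add: power2_eq_square algebra_simps)
  qed
  have Sx0: "(S_mat::real^'n^'n) *v x0 = K *\<^sub>R b"
  proof -
    have "((S_mat::real^'n^'n) *v x0)$j = (K *\<^sub>R b)$j" for j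
    proof -
      have "((S_mat::real^'n^'n) *v x0)$j = (n-2)*x0$j + (n-2)^2" unfolding S_mult sx0 n_def ..
      then show ?thesis unfolding x0_def b_def K_def by (auto simp: power2_eq_square algebra_simps)
    qed
    then show ?thesis by (simp add: vec_eq_iff)
  qed
  have "A *v (S_mat *v x0) = x0" by (simp add: matrix_vector_mul_assoc AS)
  then have "K *\<^sub>R (A *v b) = x0" unfolding Sx0 by (simp add: matrix_vector_mult_scaleR)
  then have "(K *\<^sub>R (A *v b))$k = x0$k" by simp
  then have "K * (A *v b)$k = -(3*n-4)" unfolding x0_def by simp
  then have Abk: "(A *v b)$k = -(3*n-4)/K" using Kpos by (simp add: field_simps)
  have "\<bar>(A *v b)$k\<bar> \<le> rs A k"
  proof -
    have "\<bar>(A *v b)$k\<bar> = \<bar>\<Sum>j\<in>UNIV. A$k$j * b$j\<bar>" by (simp add: matrix_vector_mult_def)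
    also have "\<dots> \<le> (\<Sum>j\<in>UNIV. \<bar>A$k$j * b$j\<bar>)" by (rule sum_abs)
    also have "\<dots> = rs A k" unfolding rs_def b_def by (rule sum.cong) (auto simp: abs_mult)
    finally show ?thesis .
  qed
  also have "\<dots> \<le> inf_norm A" by (rule inf_norm_ge)
  finally have "(3*n-4)/K \<le> inf_norm A" using Abk n3' Kpos by simp
  moreover have "1 / cN CARD('n) = (3*n-4)/K" unfolding cN_def K_def n_def by simp
  ultimately show ?thesis by simp
qed

lemma inv_facts: "invertible A \<Longrightarrow> A ** matrix_inv A = mat 1 \<and> matrix_inv A ** A = mat 1"
  unfolding invertible_def matrix_inv_def by (rule someI_ex)



theorem theorem1:
  fixes J :: "real^'n^'n" and l :: real
  assumes "CARD('n) \<ge> 3" and "l > 0"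
    and "transpose J = J"
    and "diag_dominant J"
    and "\<forall>i j. J $ i $ j \<ge> l"
  shows "invertible J
    \<and> inf_norm (matrix_inv J) \<le> (1 / l) * inf_norm (matrix_inv (S_mat :: real^'n^'n))
    \<and> (1 / l) * inf_norm (matrix_inv (S_mat :: real^'n^'n))
        = (3 * real CARD('n) - 4) / (2 * l * (real CARD('n) - 2) * (real CARD('n) - 1))
    \<and> (inf_norm (matrix_inv J) = (1 / l) * inf_norm (matrix_inv (S_mat :: real^'n^'n))
        \<longleftrightarrow> J = l *\<^sub>R S_mat)"
proof -
  note n3 = assms(1) and lpos = assms(2) and trJ = assms(3) and ddJ = assms(4) and geJ = assms(5)
  define c where "c = cN CARD('n)"
  have cpos: "c > 0" unfolding c_def using n3 by (rule cN_pos)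
  define J' where "J' = (1/l) *\<^sub>R J"
  have JJ': "J = l *\<^sub>R J'" unfolding J'_def using lpos by simp
  have symJ: "J$i$j = J$j$i" for i j
  proof -
    have "(transpose J)$i$j = J$j$i" by (simp add: transpose_def)
    then show ?thesis using trJ by simp
  qed
  have sym': "J'$i$j = J'$j$i" for i j unfolding J'_def using symJ by simp
  have ge': "J'$i$j \<ge> 1" for i j unfolding J'_def using geJ lpos by (simp add: field_simps)
  have dd': "diag_dominant J'"
    unfolding diag_dominant_def
  proof
    fix i
    have "row_excess J' i = (1/l) * row_excess J i"
      unfolding row_excess_def J'_def using lpos
      by (simp add: abs_mult sum_distrib_left right_diff_distrib)
    moreover have "row_excess J i \<ge> 0" using ddJ unfolding diag_dominant_def by simp
    ultimately show "row_excess J' i \<ge> 0" using lpos by simp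
  qed
  have invJ': "invertible J'"
  proof -
    have "\<forall>x. J' *v x = 0 \<longrightarrow> x = 0"
    proof (intro allI impI)
      fix x assume "J' *v x = 0"
      show "x = 0"
      proof (rule ccontr)
        assume "x \<noteq> 0"
        from key[OF n3 sym' dd' ge' this] have "cN CARD('n) * vinf x \<le> vinf (J' *v x)" by blast
        moreover have "vinf x > 0" using \<open>x \<noteq> 0\<close> by (rule vinf_pos)
        moreover have "vinf (J' *v x) = 0" using \<open>J' *v x = 0\<close> by (simp add: vinf_def)
        moreover have "cN CARD('n) > 0" using cpos unfolding c_def .
        ultimately show False using mult_pos_pos[of "cN CARD('n)" "vinf x"] by linarith
      qed
    qed
    then show ?thesis by (simp add: invertible_left_inverse matrix_left_invertible_ker)
  qed
  have invJ: "invertible J" unfolding JJ' using lpos invJ' by (simp add: scalar_invertible)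
  define A where "A = matrix_inv J"
  have JA: "J ** A = mat 1" unfolding A_def using inv_facts[OF invJ] by simp
  have J'A: "J' ** (l *\<^sub>R A) = mat 1"
  proof -
    have "J' ** (l *\<^sub>R A) = l *\<^sub>R (J' ** A)" by (metis matrix_scalar_ac scalar_matrix_assoc)
    also have "\<dots> = (l *\<^sub>R J') ** A" by (simp add: scalar_matrix_assoc)
    finally show ?thesis using JA JJ' by simp
  qed
  have coreJ: "inf_norm (l *\<^sub>R A) \<le> 1/c \<and> (J' \<noteq> S_mat \<longrightarrow> inf_norm (l *\<^sub>R A) < 1/c)"
    using core[OF n3 sym' dd' ge' J'A] unfolding c_def .
  have nA: "inf_norm (l *\<^sub>R A) = l * inf_norm A" using lpos by (rule inf_norm_scale)
  note Sh = S_hyps[OF n3]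
  have invS: "invertible (S_mat::real^'n^'n)"
  proof -
    have "\<forall>x. (S_mat::real^'n^'n) *v x = 0 \<longrightarrow> x = 0"
    proof (intro allI impI)
      fix x :: "real^'n" assume "S_mat *v x = 0"
      show "x = 0"
      proof (rule ccontr)
        assume "x \<noteq> 0"
        from key[OF n3 Sh(1) Sh(2) Sh(3) this] have "cN CARD('n) * vinf x \<le> vinf ((S_mat::real^'n^'n) *v x)" by blast
        moreover have "vinf x > 0" using \<open>x \<noteq> 0\<close> by (rule vinf_pos)
        moreover have "vinf ((S_mat::real^'n^'n) *v x) = 0" using \<open>S_mat *v x = 0\<close> by (simp add: vinf_def)
        moreover have "cN CARD('n) > 0" using cpos unfolding c_def .
        ultimately show False using mult_pos_pos[of "cN CARD('n)" "vinf x"] by linarith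
      qed
    qed
    then show ?thesis by (simp add: invertible_left_inverse matrix_left_invertible_ker)
  qed
  have normS_eq: "inf_norm B = 1/c" if SB: "(S_mat::real^'n^'n) ** B = mat 1" for B :: "real^'n^'n"
  proof -
    have "inf_norm B \<le> 1/c" using core[OF n3 Sh(1) Sh(2) Sh(3) SB] unfolding c_def by blast
    moreover have "B ** S_mat = mat 1" using SB matrix_left_right_inverse by blast
    then have "inf_norm B \<ge> 1/c" using S_lower[OF n3] unfolding c_def by blast
    ultimately show ?thesis by simp
  qed
  have nS: "inf_norm (matrix_inv (S_mat::real^'n^'n)) = 1/c"
    using normS_eq inv_facts[OF invS] by blast
  have p3: "(1/l) * (1/c) = (3 * real CARD('n) - 4) / (2 * l * (real CARD('n) - 2) * (real CARD('n) - 1))"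
    unfolding c_def cN_def by simp
  have le: "inf_norm A \<le> (1/l) * (1/c)"
  proof -
    have "l * inf_norm A \<le> 1/c" using coreJ nA by simp
    then have "inf_norm A * l \<le> 1/c" by (simp add: mult.commute)
    then have "inf_norm A \<le> (1/c)/l" by (rule pos_le_divide_eq[OF lpos, THEN iffD2])
    then show ?thesis by (simp add: mult.commute)
  qed
  have eq_iff: "inf_norm A = (1/l) * (1/c) \<longleftrightarrow> J = l *\<^sub>R S_mat"
  proof
    assume h: "inf_norm A = (1/l) * (1/c)"
    show "J = l *\<^sub>R S_mat"
    proof (rule ccontr)
      assume "J \<noteq> l *\<^sub>R S_mat"
      then have "J' \<noteq> S_mat" using JJ' by auto
      then have "l * inf_norm A < 1/c" using coreJ nA by simp
      moreover have "l * ((1/l) * (1/c)) = 1/c" using lpos by simp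
      ultimately show False using h by simp
    qed
  next
    assume h: "J = l *\<^sub>R S_mat"
    then have "J' = S_mat" unfolding J'_def using lpos by simp
    then have "inf_norm (l *\<^sub>R A) = 1/c" using normS_eq J'A by simp
    then have "l * inf_norm A = 1/c" using nA by simp
    then have "inf_norm A * l = 1/c" by (simp add: mult.commute)
    then have "inf_norm A = (1/c)/l" using lpos by (metis nonzero_mult_div_cancel_right less_irrefl)
    then show "inf_norm A = (1/l) * (1/c)" by (simp add: mult.commute)
  qed
  show ?thesis unfolding A_def[symmetric] nS using invJ le p3 eq_iff by simp
qed

end
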